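(* Let $\alpha\ge0$, $\beta\ge0$, $\gamma>0$, $T>0$ satisfy $\gamma/2+\beta+T\alpha>1/T$. Then for every $\theta\in(0,2\pi)$ both roots $\lambda\in\mathbb C$ of $$\lambda^2+\gamma\Big(\frac{1-e^{i\theta}}{T}+\lambda\Big)+\beta\lambda(1-e^{i\theta})+\alpha(2-e^{i\theta}-e^{-i\theta})=0$$ have strictly negative real part, while for $\theta=0$ the roots are $0$ and $-\gamma$. Equivalently, with $c=\cos\theta$, $s=\sin\theta$, for all $c\in[-1,1)$ with $s^2=1-c^2$, $$(\beta(1-c)+\gamma)\Big[(\beta(1-c)+\gamma)(1-c)\Big(\frac{\gamma}{T}+2\alpha\Big)+\frac{\beta\gamma}{T}s^2\Big]-\Big(\frac{\gamma}{T}\Big)^2s^2>0.$$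
   Context: This is the characteristic equation of the deterministic linear car-following system $\ddot s_n=\gamma\big(\frac{s_{n+1}-s_n}{T}-\dot s_n\big)+\beta(\dot s_{n+1}-\dot s_n)+\alpha(s_{n+1}-2s_n+s_{n-1})$ on a ring, obtained from the ansatz $s_n=\xi e^{\lambda t}e^{in\theta}$, $\theta=2\pi k/N$. *)

theory Defs
  imports Complex_Main
begin

text \<open>Characteristic polynomial of the linear car-following system on a ring,
  evaluated at lambda, for wave angle theta.\<close>
definition char_poly :: "real \<Rightarrow> real \<Rightarrow> real \<Rightarrow> real \<Rightarrow> real \<Rightarrow> complex \<Rightarrow> complex" where
  "char_poly \<alpha> \<beta> \<gamma> T \<theta> lam =
     lam^2 + of_real \<gamma> * ((1 - cis \<theta>) / of_real T + lam)
     + of_real \<beta> * lam * (1 - cis \<theta>)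
     + of_real \<alpha> * (2 - cis \<theta> - cis (-\<theta>))"

end

theory Submission
  imports Defs
begin

lemma part3:
  fixes \<alpha> \<beta> \<gamma> T c s :: real
  assumes ha: "\<alpha> \<ge> 0" and hb: "\<beta> \<ge> 0" and hg: "\<gamma> > 0" and hT: "T > 0"
    and hh: "\<gamma> / 2 + \<beta> + T * \<alpha> > 1 / T"
    and hc: "-1 \<le> c" "c < 1" and hs: "s^2 = 1 - c^2"
  shows "(\<beta> * (1 - c) + \<gamma>) * ((\<beta> * (1 - c) + \<gamma>) * (1 - c) * (\<gamma> / T + 2 * \<alpha>)
            + \<beta> * \<gamma> / T * s^2) - (\<gamma> / T)^2 * s^2 > 0"
proof -
  define u where "u = 1 - c"
  define g where "g = \<gamma> / T"
  define B where "B = \<beta> * u + \<gamma>"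
  have u0: "u > 0" "u \<le> 2" using hc by (auto simp: u_def)
  have g0: "g > 0" using hg hT by (simp add: g_def)
  have s2: "s^2 = u * (2 - u)" using hs by (simp add: u_def power2_eq_square algebra_simps)
  have Bg: "B \<ge> \<gamma>" using hb u0 by (simp add: B_def)
  define f where "f = B^2 * (g + 2*\<alpha>) + \<beta> * g * B * (2 - u) - g^2 * (2 - u)"
  have E: "(\<beta> * (1 - c) + \<gamma>) * ((\<beta> * (1 - c) + \<gamma>) * (1 - c) * (\<gamma> / T + 2 * \<alpha>)
            + \<beta> * \<gamma> / T * s^2) - (\<gamma> / T)^2 * s^2 = u * f"
    unfolding f_def s2 B_def g_def u_def[symmetric] using hT by (simp add: field_simps power2_eq_square)
  have key: "\<gamma>^2 * (g + 2*\<alpha>) + 2 * g * \<beta> * \<gamma> - 2 * g^2 > 0"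
  proof -
    have eq: "\<gamma>^2 * (g + 2*\<alpha>) + 2 * g * \<beta> * \<gamma> - 2 * g^2
        = 2 * \<gamma>^2 / T * (\<gamma> / 2 + \<beta> + T * \<alpha> - 1 / T)"
      unfolding g_def using hT by (simp add: field_simps power2_eq_square)
    have "2 * \<gamma>^2 / T * (\<gamma> / 2 + \<beta> + T * \<alpha> - 1 / T) > 0"
      using hh hg hT by (intro mult_pos_pos) auto
    then show ?thesis using eq by simp
  qed
  have "f > 0"
  proof (cases "\<beta> * B - g \<le> 0")
    case True
    have f2: "f = B^2 * (g + 2*\<alpha>) + 2 * g * \<beta> * B - 2 * g^2 - g * u * (\<beta> * B - g)"
      unfolding f_def by (simp add: algebra_simps power2_eq_square)
    have "g * u * (\<beta> * B - g) \<le> 0"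
      using True g0 u0 by (simp add: mult_nonneg_nonpos)
    moreover have "B^2 * (g + 2*\<alpha>) \<ge> \<gamma>^2 * (g + 2*\<alpha>)"
      using Bg hg g0 ha by (intro mult_right_mono power_mono) auto
    moreover have "2 * g * \<beta> * B \<ge> 2 * g * \<beta> * \<gamma>"
      using Bg g0 hb by (intro mult_left_mono) auto
    ultimately show ?thesis using key f2 by linarith
  next
    case False
    have f2: "f = B^2 * (g + 2*\<alpha>) + g * (2 - u) * (\<beta> * B - g)"
      unfolding f_def by (simp add: algebra_simps power2_eq_square)
    have "g * (2 - u) * (\<beta> * B - g) \<ge> 0" using False g0 u0 by simp
    moreover have "B^2 * (g + 2*\<alpha>) > 0" using Bg hg g0 ha by simp
    ultimately show ?thesis using f2 by linarith
  qed
  then show ?thesis using E u0 by simp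
qed

lemma quad:
  fixes a b c d x y :: real
  assumes a: "a > 0" and c: "c \<ge> 0" and D: "a^2 * c + a * b * d - d^2 > 0"
    and R: "x^2 - y^2 + a * x - b * y + c = 0"
    and I: "2 * x * y + a * y + b * x + d = 0"
  shows "x < 0"
proof (rule ccontr)
  assume "\<not> x < 0" hence x: "x \<ge> 0" by simp
  define F where "F = 4*x^4 + 8*a*x^3 + (5*a^2 + 4*c + b^2)*x^2 + (a^3 + 4*a*c + a*b^2)*x + (a^2 * c + a * b * d - d^2)"
  have "F = (2*x+a)^2 * (x^2 - y^2 + a * x - b * y + c)
     + (y*(2*x+a) - (b*x+d) + b*(2*x+a)) * (2 * x * y + a * y + b * x + d)"
    unfolding F_def by (simp add: algebra_simps power2_eq_square power3_eq_cube power4_eq_xxxx)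
  hence F0: "F = 0" using R I by simp
  have "4*x^4 + 8*a*x^3 + (5*a^2 + 4*c + b^2)*x^2 + (a^3 + 4*a*c + a*b^2)*x \<ge> 0"
    using x a c by (intro add_nonneg_nonneg mult_nonneg_nonneg) auto
  with D F0 show False unfolding F_def by linarith
qed


theorem mainTheorem6:
  fixes \<alpha> \<beta> \<gamma> T :: real
  assumes "\<alpha> \<ge> 0" and "\<beta> \<ge> 0" and "\<gamma> > 0" and "T > 0"
    and "\<gamma> / 2 + \<beta> + T * \<alpha> > 1 / T"
  shows "(\<forall>\<theta> lam. 0 < \<theta> \<and> \<theta> < 2 * pi \<and> char_poly \<alpha> \<beta> \<gamma> T \<theta> lam = 0 \<longrightarrow> Re lam < 0)
    \<and> {lam. char_poly \<alpha> \<beta> \<gamma> T 0 lam = 0} = {0, - complex_of_real \<gamma>}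
    \<and> (\<forall>c s. -1 \<le> c \<and> c < 1 \<and> s^2 = 1 - c^2 \<longrightarrow>
         (\<beta> * (1 - c) + \<gamma>) * ((\<beta> * (1 - c) + \<gamma>) * (1 - c) * (\<gamma> / T + 2 * \<alpha>)
            + \<beta> * \<gamma> / T * s^2) - (\<gamma> / T)^2 * s^2 > 0)"
proof (intro conjI)
  show P3: "\<forall>c s. -1 \<le> c \<and> c < 1 \<and> s^2 = 1 - c^2 \<longrightarrow>
         (\<beta> * (1 - c) + \<gamma>) * ((\<beta> * (1 - c) + \<gamma>) * (1 - c) * (\<gamma> / T + 2 * \<alpha>)
            + \<beta> * \<gamma> / T * s^2) - (\<gamma> / T)^2 * s^2 > 0"
    using part3[OF assms] by blast
  show "{lam. char_poly \<alpha> \<beta> \<gamma> T 0 lam = 0} = {0, - complex_of_real \<gamma>}"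
  proof -
    have "char_poly \<alpha> \<beta> \<gamma> T 0 lam = lam * (lam + of_real \<gamma>)" for lam
      by (simp add: char_poly_def power2_eq_square algebra_simps)
    then show ?thesis by (auto simp: add_eq_0_iff)
  qed
  show "\<forall>\<theta> lam. 0 < \<theta> \<and> \<theta> < 2 * pi \<and> char_poly \<alpha> \<beta> \<gamma> T \<theta> lam = 0 \<longrightarrow> Re lam < 0"
  proof (intro allI impI, elim conjE)
    fix \<theta> lam assume t1: "0 < \<theta>" and t2: "\<theta> < 2 * pi" and h: "char_poly \<alpha> \<beta> \<gamma> T \<theta> lam = 0"
    define C where "C = cos \<theta>"
    define S where "S = sin \<theta>"
    define x where "x = Re lam"
    define y where "y = Im lam"
    have "sin (\<theta>/2) > 0" using t1 t2 by (intro sin_gt_zero) auto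
    moreover have "C = 1 - 2 * sin (\<theta>/2) ^ 2" unfolding C_def
      using cos_double_sin[of "\<theta>/2"] by simp
    ultimately have C1: "C < 1" by simp
    have Cm: "-1 \<le> C" unfolding C_def by simp
    have SC: "S^2 = 1 - C^2" unfolding S_def C_def by (simp add: sin_squared_eq)
    have hR: "Re (char_poly \<alpha> \<beta> \<gamma> T \<theta> lam) = 0" and hI: "Im (char_poly \<alpha> \<beta> \<gamma> T \<theta> lam) = 0"
      using h by auto
    have R: "x^2 - y^2 + (\<beta> * (1 - C) + \<gamma>) * x - (- \<beta> * S) * y + (1 - C) * (\<gamma> / T + 2 * \<alpha>) = 0"
      using hR unfolding x_def y_def C_def S_def
      by (simp add: char_poly_def power2_eq_square algebra_simps add_divide_distrib diff_divide_distrib)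
    have I: "2 * x * y + (\<beta> * (1 - C) + \<gamma>) * y + (- \<beta> * S) * x + (- \<gamma> * S / T) = 0"
      using hI unfolding x_def y_def C_def S_def
      by (simp add: char_poly_def power2_eq_square algebra_simps add_divide_distrib diff_divide_distrib)
    have D: "(\<beta> * (1 - C) + \<gamma>)^2 * ((1 - C) * (\<gamma> / T + 2 * \<alpha>)) + (\<beta> * (1 - C) + \<gamma>) * (- \<beta> * S) * (- \<gamma> * S / T) - (- \<gamma> * S / T)^2
       = (\<beta> * (1 - C) + \<gamma>) * ((\<beta> * (1 - C) + \<gamma>) * (1 - C) * (\<gamma> / T + 2 * \<alpha>)
            + \<beta> * \<gamma> / T * S^2) - (\<gamma> / T)^2 * S^2"
      using assms(4) by (simp add: field_simps power2_eq_square)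
    have Dp: "(\<beta> * (1 - C) + \<gamma>) * ((\<beta> * (1 - C) + \<gamma>) * (1 - C) * (\<gamma> / T + 2 * \<alpha>)
            + \<beta> * \<gamma> / T * S^2) - (\<gamma> / T)^2 * S^2 > 0"
      using P3 C1 Cm SC by blast
    have a: "\<beta> * (1 - C) + \<gamma> > 0" using assms C1 by (simp add: add_nonneg_pos)
    have c: "(1 - C) * (\<gamma> / T + 2 * \<alpha>) \<ge> 0" using assms C1 by simp
    have "x < 0" by (rule quad[OF a c _ R I]) (use D Dp in simp)
    then show "Re lam < 0" by (simp add: x_def)
  qed
qed

end
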